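(* Let $A = (a_{ij}) \in \mathbb{R}^{p \times n}$, let $1 \leq k \leq p$, and let $\widetilde{x} \in \{0,1\}^n$. Let $P \subseteq \{1, \ldots, p\}$ be a subset with $|P| \geq k$ such that $Q_k(A\widetilde{x}) = \min_{i \in P} \sum_{j=1}^n a_{ij}\widetilde{x}_j$. Then for all $x \in \{0,1\}^n$, $$Q_k(Ax) \geq Q_k(A\widetilde{x}) + \sum_{j : \widetilde{x}_j = 1} (x_j - 1)\max_{i \in P} a_{ij} + \sum_{j : \widetilde{x}_j = 0} x_j \min_{i \in P} a_{ij},$$ and this inequality holds with equality for $x = \widetilde{x}$.
   Context: For $y \in \mathbb{R}^p$ and an integer $1 \leq k \leq p$, $Q_k(y)$ denotes the $k$-th largest entry of $y$ (entries counted with multiplicity). *)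

theory Defs
  imports "HOL-Analysis.Analysis"
begin

text \<open>Vectors in R^p are modelled as functions nat => real on indices 0..p-1
  (paper index i corresponds to i-1).\<close>
definition Qk :: "nat \<Rightarrow> nat \<Rightarrow> (nat \<Rightarrow> real) \<Rightarrow> real" where
  "Qk p k y = rev (sort (map y [0..<p])) ! (k - 1)"

definition matvec :: "nat \<Rightarrow> (nat \<Rightarrow> nat \<Rightarrow> real) \<Rightarrow> (nat \<Rightarrow> real) \<Rightarrow> nat \<Rightarrow> real" where
  "matvec n A x = (\<lambda>i. \<Sum>j<n. A i j * x j)"

end

theory Submission
  imports Defs
begin

lemma Qk_ge:
  fixes y :: "nat \<Rightarrow> real"
  assumes k1: "1 \<le> k" and kp: "k \<le> p" and P: "P \<subseteq> {..<p}" and cP: "card P \<ge> k"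
    and ge: "\<forall>i\<in>P. y i \<ge> c"
  shows "Qk p k y \<ge> c"
proof (rule ccontr)
  assume neg: "\<not> c \<le> Qk p k y"
  define L where "L = sort (map y [0..<p])"
  have lenL: "length L = p" by (simp add: L_def)
  have sL: "sorted L" by (simp add: L_def)
  have Q: "Qk p k y = L ! (p - k)"
    unfolding Qk_def L_def[symmetric] using k1 kp lenL by (simp add: rev_nth)
  have lt: "L ! m < c" if "m \<le> p - k" for m
  proof -
    have "L ! m \<le> L ! (p - k)" using sorted_nth_mono[OF sL that] k1 kp lenL by simp
    thus ?thesis using neg Q by simp
  qed
  have "length (filter (\<lambda>v. c \<le> v) L) = length (filter (\<lambda>v. c \<le> v) (map y [0..<p]))"
  proof -
    have "mset L = mset (map y [0..<p])" by (simp add: L_def)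
    hence "mset (filter (\<lambda>v. c \<le> v) L) = mset (filter (\<lambda>v. c \<le> v) (map y [0..<p]))"
      by (simp add: mset_filter)
    thus ?thesis by (metis size_mset)
  qed
  also have "\<dots> = length (filter (\<lambda>i. c \<le> y i) [0..<p])" by (simp add: filter_map comp_def)
  also have "\<dots> = card {i. i < p \<and> c \<le> y i}"
    by (subst distinct_card[symmetric]) (auto intro: arg_cong[where f=card])
  finally have eq1: "length (filter (\<lambda>v. c \<le> v) L) = card {i. i < p \<and> c \<le> y i}" .
  have "card P \<le> card {i. i < p \<and> c \<le> y i}"
    by (rule card_mono) (use P ge in auto)
  hence A: "k \<le> length (filter (\<lambda>v. c \<le> v) L)" using eq1 cP by simp
  have "length (filter (\<lambda>v. c \<le> v) L) = card {m. m < length L \<and> c \<le> L ! m}"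
    by (rule length_filter_conv_card)
  also have "\<dots> \<le> card {p - k + 1..<p}"
  proof (rule card_mono)
    show "{m. m < length L \<and> c \<le> L ! m} \<subseteq> {p - k + 1..<p}"
    proof
      fix m assume "m \<in> {m. m < length L \<and> c \<le> L ! m}"
      hence "m < p" "c \<le> L ! m" using lenL by auto
      moreover have "\<not> m \<le> p - k" using lt \<open>c \<le> L ! m\<close> by (metis not_less)
      ultimately show "m \<in> {p - k + 1..<p}" by auto
    qed
  qed simp
  also have "\<dots> = k - 1" using k1 kp by simp
  finally show False using A k1 by simp
qed

theorem theorem8:
  fixes p n k :: nat and A :: "nat \<Rightarrow> nat \<Rightarrow> real"
    and xt :: "nat \<Rightarrow> real" and P :: "nat set"
  assumes "1 \<le> k" and "k \<le> p"
    and "\<forall>j<n. xt j \<in> {0, 1}"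
    and "P \<subseteq> {..<p}" and "card P \<ge> k"
    and "Qk p k (matvec n A xt) = (MIN i\<in>P. \<Sum>j<n. A i j * xt j)"
  shows "(\<forall>x. (\<forall>j<n. x j \<in> {0, 1}) \<longrightarrow>
           Qk p k (matvec n A x) \<ge> Qk p k (matvec n A xt)
             + (\<Sum>j\<in>{j. j < n \<and> xt j = 1}. (x j - 1) * (MAX i\<in>P. A i j))
             + (\<Sum>j\<in>{j. j < n \<and> xt j = 0}. x j * (MIN i\<in>P. A i j)))
       \<and> Qk p k (matvec n A xt) = Qk p k (matvec n A xt)
             + (\<Sum>j\<in>{j. j < n \<and> xt j = 1}. (xt j - 1) * (MAX i\<in>P. A i j))
             + (\<Sum>j\<in>{j. j < n \<and> xt j = 0}. xt j * (MIN i\<in>P. A i j))"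
proof
  have finP: "finite P" using assms(4) finite_subset by blast
  have neP: "P \<noteq> {}" using assms(1,5) by auto
  define S1 where "S1 = {j. j < n \<and> xt j = 1}"
  define S0 where "S0 = {j. j < n \<and> xt j = 0}"
  have fin: "finite S1" "finite S0" by (auto simp: S1_def S0_def)
  have disj: "S1 \<inter> S0 = {}" by (auto simp: S1_def S0_def)
  have un: "{..<n} = S1 \<union> S0" using assms(3) by (auto simp: S1_def S0_def)
  have split: "(\<Sum>j<n. f j) = (\<Sum>j\<in>S1. f j) + (\<Sum>j\<in>S0. f j)" for f :: "nat \<Rightarrow> real"
    unfolding un by (rule sum.union_disjoint[OF fin disj])
  show "\<forall>x. (\<forall>j<n. x j \<in> {0, 1}) \<longrightarrow>
           Qk p k (matvec n A x) \<ge> Qk p k (matvec n A xt)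
             + (\<Sum>j\<in>{j. j < n \<and> xt j = 1}. (x j - 1) * (MAX i\<in>P. A i j))
             + (\<Sum>j\<in>{j. j < n \<and> xt j = 0}. x j * (MIN i\<in>P. A i j))"
  proof (intro allI impI)
    fix x :: "nat \<Rightarrow> real" assume x: "\<forall>j<n. x j \<in> {0, 1}"
    show "Qk p k (matvec n A x) \<ge> Qk p k (matvec n A xt)
             + (\<Sum>j\<in>{j. j < n \<and> xt j = 1}. (x j - 1) * (MAX i\<in>P. A i j))
             + (\<Sum>j\<in>{j. j < n \<and> xt j = 0}. x j * (MIN i\<in>P. A i j))"
      unfolding S1_def[symmetric] S0_def[symmetric]
    proof (rule Qk_ge[OF assms(1,2,4,5)], intro ballI)
      fix i assume iP: "i \<in> P"
      have m1: "(MIN i\<in>P. \<Sum>j<n. A i j * xt j) \<le> (\<Sum>j<n. A i j * xt j)"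
        using finP iP by simp
      have xt1: "(\<Sum>j<n. A i j * xt j) = (\<Sum>j\<in>S1. A i j)"
        by (simp add: split S1_def S0_def)
      have ax: "matvec n A x i = (\<Sum>j\<in>S1. A i j) + (\<Sum>j\<in>S1. (x j - 1) * A i j) + (\<Sum>j\<in>S0. x j * A i j)"
        by (simp add: matvec_def split algebra_simps sum.distrib sum_subtractf)
      have b1: "(\<Sum>j\<in>S1. (x j - 1) * (MAX i\<in>P. A i j)) \<le> (\<Sum>j\<in>S1. (x j - 1) * A i j)"
      proof (rule sum_mono)
        fix j assume "j \<in> S1"
        hence "x j - 1 \<le> 0" using x by (auto simp: S1_def)
        moreover have "A i j \<le> (MAX i\<in>P. A i j)" using finP iP by simp
        ultimately show "(x j - 1) * (MAX i\<in>P. A i j) \<le> (x j - 1) * A i j"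
          by (simp add: mult_left_mono_neg)
      qed
      have b0: "(\<Sum>j\<in>S0. x j * (MIN i\<in>P. A i j)) \<le> (\<Sum>j\<in>S0. x j * A i j)"
      proof (rule sum_mono)
        fix j assume "j \<in> S0"
        hence "0 \<le> x j" using x by (auto simp: S0_def)
        moreover have "(MIN i\<in>P. A i j) \<le> A i j" using finP iP by simp
        ultimately show "x j * (MIN i\<in>P. A i j) \<le> x j * A i j"
          by (simp add: mult_left_mono)
      qed
      show "Qk p k (matvec n A xt) + (\<Sum>j\<in>S1. (x j - 1) * (MAX i\<in>P. A i j))
             + (\<Sum>j\<in>S0. x j * (MIN i\<in>P. A i j)) \<le> matvec n A x i"
        using ax b1 b0 m1 xt1 assms(6) by linarith
    qed
  qed
  show "Qk p k (matvec n A xt) = Qk p k (matvec n A xt)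
             + (\<Sum>j\<in>{j. j < n \<and> xt j = 1}. (xt j - 1) * (MAX i\<in>P. A i j))
             + (\<Sum>j\<in>{j. j < n \<and> xt j = 0}. xt j * (MIN i\<in>P. A i j))"
    by simp
qed

end
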